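(* Let $A\in\mathbb{R}^{n\times n}$ be symmetric with eigenvalues $\alpha_1\ge\cdots\ge\alpha_n$, let $g\in\mathbb{R}^n$ be nonzero, $\Delta>0$, and consider the trust-region subproblem (TRS) of minimizing $f(x)=\frac12x^TAx+x^Tg$ subject to $\|x\|\le\Delta$, in the easy case. Let $x_{opt},\lambda_{opt}$, $A_{opt}$, $\kappa$, $Q_k$, $x_k$, $k_{\max}$ and $\epsilon_k$ be as in the context. If $\|x_{opt}\|=\|x_k\|=\Delta$ for $k\in\{1,2,\ldots,k_{\max}\}$, then $$0\le f(x_k)-f(x_{opt})\le \frac12\|A_{opt}\|\Big(1+\frac{\epsilon_k^2}{\Delta^2}\Big)\epsilon_k^2\le 2\|A_{opt}\|(\Delta^2+\epsilon_k^2)\Big(\frac{\sqrt\kappa-1}{\sqrt\kappa+1}\Big)^{2k},$$ and $$\|x_k-x_{opt}\|\le\sqrt{\kappa\Big(1+\frac{\epsilon_k^2}{\Delta^2}\Big)}\,\epsilon_k\le 2\sqrt{\kappa(\Delta^2+\epsilon_k^2)}\Big(\frac{\sqrt\kappa-1}{\sqrt\kappa+1}\Big)^{k}.$$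
   Context: All norms are Euclidean. $x_{opt}$ is a global minimizer of the TRS and $\lambda_{opt}\ge0$ its Lagrange multiplier: $(A+\lambda_{opt}I)x_{opt}=-g$, $\lambda_{opt}(\Delta-\|x_{opt}\|)=0$, $A+\lambda_{opt}I\succeq0$. Easy case means $\lambda_{opt}>-\alpha_n$ (so $A+\lambda_{opt}I\succ0$ and $x_{opt}$ is unique). Set $A_{opt}=A+\lambda_{opt}I$ and $\kappa=(\alpha_1+\lambda_{opt})/(\alpha_n+\lambda_{opt})$. The Lanczos process on $A$ with starting vector $g$ produces $Q_k=[q_1,\ldots,q_k]$ with orthonormal columns spanning the Krylov subspace $\mathcal{K}_k(A,g)=\mathrm{span}\{g,Ag,\ldots,A^{k-1}g\}$, $q_1=g/\|g\|$, the symmetric tridiagonal $T_k=Q_k^TAQ_k$, and $AQ_k=Q_kT_k+\beta_kq_{k+1}e_k^T$ ($e_k$ the $k$-th unit vector, $\beta_k\ge0$); $k_{\max}$ is the first step at which the Lanczos process breaks down. The GLTR iterate is $x_k=Q_kh_k$, where $h_k$ minimizes $\frac12h^TT_kh+\|g\|h^Te_1$ over $\|h\|\le\Delta$, with Lagrange multiplier $\lambda_k\ge0$: $(T_k+\lambda_kI)h_k=-\|g\|e_1$, $\lambda_k(\Delta-\|h_k\|)=0$, $T_k+\lambda_kI\succeq0$ (this reduced problem has a unique solution). Finally $\epsilon_k=\min_{x\in\mathcal{K}_k(A,g)}\|x-x_{opt}\|=\|(I-Q_kQ_k^T)x_{opt}\|$. *)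

theory Defs
  imports "HOL-Analysis.Analysis"
begin

text \<open>Objective of the trust-region subproblem: f(x) = 1/2 x^T A x + x^T g.\<close>
definition trs_obj :: "real^'n^'n \<Rightarrow> real^'n \<Rightarrow> real^'n \<Rightarrow> real" where
  "trs_obj A g x = (1/2) * (x \<bullet> (A *v x)) + x \<bullet> g"

text \<open>Set of (real) eigenvalues of a square matrix.\<close>
definition eigvals :: "real^'n^'n \<Rightarrow> real set" where
  "eigvals A = {a. \<exists>v. v \<noteq> 0 \<and> A *v v = a *\<^sub>R v}"

text \<open>Largest (alpha_1) and smallest (alpha_n) eigenvalue.\<close>
definition alpha_max :: "real^'n^'n \<Rightarrow> real" where
  "alpha_max A = Max (eigvals A)"
definition alpha_min :: "real^'n^'n \<Rightarrow> real" where
  "alpha_min A = Min (eigvals A)"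

text \<open>Krylov subspace K_k(A,g) = span {g, Ag, ..., A^(k-1) g}.\<close>
definition krylov :: "real^'n^'n \<Rightarrow> real^'n \<Rightarrow> nat \<Rightarrow> (real^'n) set" where
  "krylov A g k = span {((\<lambda>v. A *v v) ^^ j) g | j. j < k}"

text \<open>k_max: the first step k at which the Lanczos process breaks down
  (beta_k = 0), i.e. the first k \<ge> 1 with K_(k+1) = K_k.\<close>
definition kmax :: "real^'n^'n \<Rightarrow> real^'n \<Rightarrow> nat" where
  "kmax A g = (LEAST k. 1 \<le> k \<and> krylov A g (Suc k) = krylov A g k)"

text \<open>q 1, ..., q k are the first k Lanczos vectors of A with starting vector g:
  orthonormal, q_1 = g/||g||, span{q_1..q_j} = K_j(A,g) for j = 1..k, and the
  off-diagonal entries beta_j = q_(j+1)^T A q_j are nonnegative.\<close>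
definition lanczos_vectors :: "real^'n^'n \<Rightarrow> real^'n \<Rightarrow> nat \<Rightarrow> (nat \<Rightarrow> real^'n) \<Rightarrow> bool" where
  "lanczos_vectors A g k q \<longleftrightarrow>
     q 1 = (1 / norm g) *\<^sub>R g \<and>
     (\<forall>i\<in>{1..k}. \<forall>j\<in>{1..k}. q i \<bullet> q j = (if i = j then 1 else 0)) \<and>
     (\<forall>j\<in>{1..k}. span (q ` {1..j}) = krylov A g j) \<and>
     (\<forall>j\<in>{1..<k}. 0 \<le> q (Suc j) \<bullet> (A *v q j))"

text \<open>Tridiagonal T_k = Q_k^T A Q_k, entries indexed by 1..k.\<close>
definition lanczos_T :: "real^'n^'n \<Rightarrow> (nat \<Rightarrow> real^'n) \<Rightarrow> nat \<Rightarrow> nat \<Rightarrow> real" where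
  "lanczos_T A q i j = q i \<bullet> (A *v q j)"

text \<open>Reduced objective 1/2 h^T T_k h + ||g|| h^T e_1 for h in R^k (indices 1..k).\<close>
definition red_obj :: "real^'n^'n \<Rightarrow> real^'n \<Rightarrow> (nat \<Rightarrow> real^'n) \<Rightarrow> nat \<Rightarrow> (nat \<Rightarrow> real) \<Rightarrow> real" where
  "red_obj A g q k h =
     (1/2) * (\<Sum>i=1..k. \<Sum>j=1..k. h i * lanczos_T A q i j * h j) + norm g * h 1"

text \<open>Euclidean norm of h in R^k (indices 1..k).\<close>
definition knorm :: "nat \<Rightarrow> (nat \<Rightarrow> real) \<Rightarrow> real" where
  "knorm k h = sqrt (\<Sum>i=1..k. (h i)^2)"

text \<open>x_k = Q_k h.\<close>
definition lanczos_lift :: "(nat \<Rightarrow> real^'n) \<Rightarrow> nat \<Rightarrow> (nat \<Rightarrow> real) \<Rightarrow> real^'n" where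
  "lanczos_lift q k h = (\<Sum>i=1..k. h i *\<^sub>R q i)"

end

theory Submission
  imports Defs
begin


lemma sym_inner: fixes A :: "real^'n^'n" assumes "transpose A = A" shows "x \<bullet> (A *v y) = (A *v x) \<bullet> y"
  by (metis assms dot_lmul_matrix vector_transpose_matrix)

lemma ortho_inner_sum:
  fixes e :: "'i \<Rightarrow> 'a::real_inner"
  assumes "finite I" "\<forall>i\<in>I. \<forall>j\<in>I. e i \<bullet> e j = (if i = j then 1 else 0)" "j \<in> I"
  shows "(\<Sum>i\<in>I. c i *\<^sub>R e i) \<bullet> e j = c j"
proof -
  have "(\<Sum>i\<in>I. c i *\<^sub>R e i) \<bullet> e j = (\<Sum>i\<in>I. c i * (if i = j then 1 else 0))"
    using assms by (simp add: inner_sum_left)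
  also have "\<dots> = c j" using assms by (simp add: if_distrib cong: if_cong)
  finally show ?thesis .
qed

lemma ortho_norm2:
  fixes e :: "'i \<Rightarrow> 'a::real_inner"
  assumes "finite I" "\<forall>i\<in>I. \<forall>j\<in>I. e i \<bullet> e j = (if i = j then 1 else 0)"
  shows "(\<Sum>i\<in>I. c i *\<^sub>R e i) \<bullet> (\<Sum>i\<in>I. c i *\<^sub>R e i) = (\<Sum>i\<in>I. (c i)^2)"
proof -
  have "(\<Sum>i\<in>I. c i *\<^sub>R e i) \<bullet> (\<Sum>i\<in>I. c i *\<^sub>R e i) = (\<Sum>j\<in>I. c j * ((\<Sum>i\<in>I. c i *\<^sub>R e i) \<bullet> e j))"
    by (simp add: inner_sum_right)
  also have "\<dots> = (\<Sum>j\<in>I. (c j)^2)"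
    using ortho_inner_sum[OF assms] by (simp add: power2_eq_square)
  finally show ?thesis .
qed

lemma ortho_expand:
  fixes e :: "'i \<Rightarrow> 'a::real_inner"
  assumes "finite I" "\<forall>i\<in>I. \<forall>j\<in>I. e i \<bullet> e j = (if i = j then 1 else 0)" "v \<in> span (e ` I)"
  shows "v = (\<Sum>i\<in>I. (v \<bullet> e i) *\<^sub>R e i)"
proof -
  define d where "d = v - (\<Sum>i\<in>I. (v \<bullet> e i) *\<^sub>R e i)"
  have dS: "d \<in> span (e ` I)"
    unfolding d_def using assms(3)
    by (intro span_diff span_sum span_scale) (auto intro: span_base)
  have "orthogonal d y" if "y \<in> e ` I" for y
  proof -
    from that obtain j where j: "j \<in> I" "y = e j" by auto
    have "d \<bullet> e j = v \<bullet> e j - (\<Sum>i\<in>I. (v \<bullet> e i) *\<^sub>R e i) \<bullet> e j"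
      unfolding d_def by (simp add: inner_diff_left)
    also have "\<dots> = 0" using ortho_inner_sum[OF assms(1,2) j(1)] by simp
    finally show ?thesis using j by (simp add: orthogonal_def)
  qed
  then have "orthogonal d d" using orthogonal_to_span[OF dS] by blast
  then have "d = 0" by (simp add: orthogonal_def)
  then show ?thesis unfolding d_def by simp
qed

lemma quad_zero:
  fixes b c :: real
  assumes "\<forall>t. 0 \<le> 2 * t * b + t^2 * c" "b \<ge> 0"
  shows "b = 0"
proof -
  have gen: "(2 * (- b / D) * b + (- b / D)^2 * c) * D^2 = b^2 * (c - 2 * D)" if "D > 0" for D :: real
    using that by (simp add: field_simps power2_eq_square)
  define t where "t = - b / (\<bar>c\<bar> + 1)"
  have pos: "\<bar>c\<bar> + 1 > 0" by simp
  have "0 \<le> 2 * t * b + t^2 * c" using assms by blast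
  then have "0 \<le> (2 * t * b + t^2 * c) * (\<bar>c\<bar> + 1)^2" by simp
  also have "\<dots> = b^2 * (c - 2 * (\<bar>c\<bar> + 1))"
    unfolding t_def using gen[OF pos] .
  finally have "0 \<le> b^2 * (c - 2 * (\<bar>c\<bar> + 1))" .
  moreover have "c - 2 * (\<bar>c\<bar> + 1) < 0" by (cases "c \<ge> 0") auto
  ultimately have "b^2 \<le> 0" by (simp add: mult_le_0_iff zero_le_mult_iff)
  then show ?thesis by simp
qed

lemma eigen_exists:
  fixes M :: "real^'n^'n"
  assumes sym: "transpose M = M" and S: "subspace S" and inv: "\<forall>v\<in>S. M *v v \<in> S"
    and nz: "v0 \<in> S" "v0 \<noteq> 0"
  shows "\<exists>u\<in>S. norm u = 1 \<and> M *v u = (u \<bullet> (M *v u)) *\<^sub>R u"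
proof -
  let ?K = "S \<inter> sphere 0 1"
  have "compact ?K"
  proof -
    have "compact (sphere (0::real^'n) 1 \<inter> S)"
      using S by (intro compact_Int_closed compact_sphere closed_subspace)
    then show ?thesis by (simp add: Int_commute)
  qed
  moreover have "?K \<noteq> {}"
  proof -
    have "(1 / norm v0) *\<^sub>R v0 \<in> ?K" using nz S by (simp add: subspace_scale)
    then show ?thesis by blast
  qed
  moreover have "continuous_on ?K (\<lambda>v. v \<bullet> (M *v v))"
    by (intro continuous_intros linear_continuous_on matrix_vector_mul_bounded_linear)
  ultimately obtain u where u: "u \<in> ?K" "\<forall>y\<in>?K. u \<bullet> (M *v u) \<le> y \<bullet> (M *v y)"
    using continuous_attains_inf by blast
  define mu where "mu = u \<bullet> (M *v u)"
  have uS: "u \<in> S" and nu: "norm u = 1" using u by auto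
  have uu: "u \<bullet> u = 1" using nu by (simp add: norm_eq_1)
  have ge: "mu * (v \<bullet> v) \<le> v \<bullet> (M *v v)" if "v \<in> S" for v
  proof (cases "v = 0")
    case True then show ?thesis by simp
  next
    case False
    let ?w = "(1 / norm v) *\<^sub>R v"
    have "?w \<in> ?K" using that False S by (simp add: subspace_scale)
    then have "mu \<le> ?w \<bullet> (M *v ?w)" using u unfolding mu_def by blast
    also have "\<dots> = (v \<bullet> (M *v v)) / (norm v)^2"
      by (simp add: matrix_vector_mult_scaleR power2_eq_square)
    finally show ?thesis using False by (simp add: field_simps dot_square_norm)
  qed
  define e where "e = M *v u - mu *\<^sub>R u"
  have eS: "e \<in> S" unfolding e_def using uS inv S by (simp add: subspace_diff subspace_scale)
  have "0 \<le> 2 * t * (e \<bullet> e) + t^2 * (e \<bullet> (M *v e) - mu * (e \<bullet> e))" for t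
  proof -
    have "u + t *\<^sub>R e \<in> S" using uS eS S by (simp add: subspace_add subspace_scale)
    then have h: "mu * ((u + t *\<^sub>R e) \<bullet> (u + t *\<^sub>R e)) \<le> (u + t *\<^sub>R e) \<bullet> (M *v (u + t *\<^sub>R e))"
      by (rule ge)
    have s1: "e \<bullet> (M *v u) = u \<bullet> (M *v e)"
      using sym_inner[OF sym] by (simp add: inner_commute)
    have eu: "e \<bullet> (M *v u) - mu * (e \<bullet> u) = e \<bullet> e"
      unfolding e_def by (simp add: inner_diff_left inner_diff_right algebra_simps inner_commute)
    have "(u + t *\<^sub>R e) \<bullet> (M *v (u + t *\<^sub>R e)) - mu * ((u + t *\<^sub>R e) \<bullet> (u + t *\<^sub>R e))
        = (u \<bullet> (M *v u) - mu * (u \<bullet> u)) + 2 * t * (e \<bullet> (M *v u) - mu * (e \<bullet> u)) + t^2 * (e \<bullet> (M *v e) - mu * (e \<bullet> e))"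
      using s1 by (simp add: matrix_vector_right_distrib matrix_vector_mult_scaleR inner_add_left inner_add_right
          algebra_simps power2_eq_square inner_commute)
    also have "\<dots> = 2 * t * (e \<bullet> e) + t^2 * (e \<bullet> (M *v e) - mu * (e \<bullet> e))"
      using eu uu unfolding mu_def by simp
    finally show ?thesis using h by linarith
  qed
  then have "e \<bullet> e = 0" by (intro quad_zero) auto
  then have "e = 0" by simp
  then show ?thesis using uS nu unfolding e_def mu_def by auto
qed

lemma spectral_sub:
  fixes M :: "real^'n^'n"
  assumes sym: "transpose M = M"
  shows "subspace S \<Longrightarrow> (\<forall>v\<in>S. M *v v \<in> S) \<Longrightarrow>
    \<exists>U. finite U \<and> U \<subseteq> S \<and> (\<forall>u\<in>U. \<forall>w\<in>U. u \<bullet> w = (if u = w then 1 else 0))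
      \<and> (\<forall>u\<in>U. M *v u = (u \<bullet> (M *v u)) *\<^sub>R u) \<and> S \<subseteq> span U"
proof (induction "dim S" arbitrary: S rule: less_induct)
  case less
  show ?case
  proof (cases "S \<subseteq> {0}")
    case True
    then show ?thesis by (intro exI[of _ "{}"]) auto
  next
    case False
    then obtain v0 where v0: "v0 \<in> S" "v0 \<noteq> 0" by auto
    obtain u where u: "u \<in> S" "norm u = 1" "M *v u = (u \<bullet> (M *v u)) *\<^sub>R u"
      using eigen_exists[OF sym less.prems(1) less.prems(2) v0] by blast
    define mu where "mu = u \<bullet> (M *v u)"
    have Mu: "M *v u = mu *\<^sub>R u" using u(3) unfolding mu_def .
    have uu: "u \<bullet> u = 1" using u(2) by (simp add: norm_eq_1)
    define S' where "S' = {v \<in> S. v \<bullet> u = 0}"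
    have sub': "subspace S'"
      using less.prems(1) unfolding S'_def subspace_def by (auto simp: inner_add_left)
    have inv': "\<forall>v\<in>S'. M *v v \<in> S'"
    proof
      fix v assume v: "v \<in> S'"
      have "(M *v v) \<bullet> u = v \<bullet> (M *v u)" using sym_inner[OF sym] by (simp add: inner_commute)
      also have "\<dots> = mu * (v \<bullet> u)" by (simp add: Mu)
      finally show "M *v v \<in> S'" using v less.prems(2) unfolding S'_def by auto
    qed
    have "u \<notin> S'" using uu unfolding S'_def by auto
    then have "S' \<subset> S" using u(1) unfolding S'_def by blast
    then have "span S' \<subset> span S"
    proof -
      have "span S' = S'" using sub' span_eq_iff by blast
      moreover have "span S = S" using less.prems(1) span_eq_iff by blast
      ultimately show ?thesis using \<open>S' \<subset> S\<close> by (simp only:)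
    qed
    then have "dim S' < dim S" by (rule dim_psubset)
    then obtain U where U: "finite U" "U \<subseteq> S'" "\<forall>u\<in>U. \<forall>w\<in>U. u \<bullet> w = (if u = w then 1 else 0)"
      "\<forall>u\<in>U. M *v u = (u \<bullet> (M *v u)) *\<^sub>R u" "S' \<subseteq> span U"
      using less.hyps[OF _ sub' inv'] by blast
    have uU: "u \<notin> U" using U(2) uu unfolding S'_def by auto
    have orth: "\<forall>a\<in>insert u U. \<forall>w\<in>insert u U. a \<bullet> w = (if a = w then 1 else 0)"
      using U(2,3) uu uU unfolding S'_def by (auto simp: inner_commute)
    have spanS: "S \<subseteq> span (insert u U)"
    proof
      fix v assume v: "v \<in> S"
      have "v - (v \<bullet> u) *\<^sub>R u \<in> S'"
        unfolding S'_def using v u(1) uu less.prems(1)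
        by (simp add: subspace_diff subspace_scale inner_diff_left)
      then have "v - (v \<bullet> u) *\<^sub>R u \<in> span (insert u U)"
        using U(5) span_mono[of U "insert u U"] by auto
      moreover have "(v \<bullet> u) *\<^sub>R u \<in> span (insert u U)"
        by (intro span_scale span_base) simp
      ultimately have "v - (v \<bullet> u) *\<^sub>R u + (v \<bullet> u) *\<^sub>R u \<in> span (insert u U)"
        by (rule span_add)
      then show "v \<in> span (insert u U)" by simp
    qed
    show ?thesis
      using U u orth spanS unfolding S'_def by (intro exI[of _ "insert u U"]) auto
  qed
qed



lemma induct2: "P 0 \<Longrightarrow> P (Suc 0) \<Longrightarrow> (\<And>n. P n \<Longrightarrow> P (Suc n) \<Longrightarrow> P (Suc (Suc n))) \<Longrightarrow> P n"
  by (induction n rule: nat_less_induct) (metis less_Suc_eq not0_implies_Suc)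

fun cheb :: "nat \<Rightarrow> real \<Rightarrow> real" where
  "cheb 0 t = 1"
| "cheb (Suc 0) t = t"
| "cheb (Suc (Suc n)) t = 2 * t * cheb (Suc n) t - cheb n t"

lemma cheb_cos: "cheb n (cos th) = cos (real n * th)"
proof (induction n rule: induct2)
  case (3 n)
  have "cos (real (Suc (Suc n)) * th) + cos (real n * th) = 2 * cos th * cos (real (Suc n) * th)"
  proof -
    have e1: "real (Suc (Suc n)) * th = real (Suc n) * th + th" by (simp add: algebra_simps)
    have e2: "real n * th = real (Suc n) * th - th" by (simp add: algebra_simps)
    show ?thesis unfolding e1 e2 cos_add cos_diff by simp
  qed
  then show ?case using 3 by simp
qed auto

lemma cheb_bound: "\<bar>t\<bar> \<le> 1 \<Longrightarrow> \<bar>cheb n t\<bar> \<le> 1"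
  using cheb_cos[of n "arccos t"] cos_arccos[of t] by (simp add: abs_le_iff)

lemma cheb_pow:
  assumes "r > 0" "2 * t = r + 1 / r"
  shows "cheb n t = (r^n + (1/r)^n) / 2"
proof (induction n rule: induct2)
  case (3 n)
  note h1 = "3.IH"(2) and h0 = "3.IH"(1)
  have "cheb (Suc (Suc n)) t = (2 * t) * cheb (Suc n) t - cheb n t" by simp
  also have "\<dots> = (r + 1/r) * ((r^(Suc n) + (1/r)^(Suc n)) / 2) - (r^n + (1/r)^n) / 2"
    by (simp only: h1 h0 assms(2))
  also have "\<dots> = (r^(Suc (Suc n)) + (1/r)^(Suc (Suc n))) / 2"
    using assms(1) by (simp add: field_simps power_Suc)
  finally show ?case .
qed (use assms in \<open>auto simp: field_simps\<close>)

fun chv :: "('a::real_vector \<Rightarrow> 'a) \<Rightarrow> nat \<Rightarrow> 'a \<Rightarrow> 'a" where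
  "chv L 0 x = x"
| "chv L (Suc 0) x = L x"
| "chv L (Suc (Suc n)) x = 2 *\<^sub>R L (chv L (Suc n) x) - chv L n x"

lemma chv_K:
  fixes L :: "'a::real_vector \<Rightarrow> 'a"
  assumes lin: "\<And>v w c. L (v - c *\<^sub>R w) = L v - c *\<^sub>R L w"
    and KL: "\<And>m v. v \<in> K m \<Longrightarrow> L v \<in> K (Suc m)"
    and Ksub: "\<And>m. subspace (K m)"
    and Kmono: "\<And>m. K m \<subseteq> K (Suc m)"
    and base: "L x - z *\<^sub>R x \<in> K 1"
  shows "chv L n x - cheb n z *\<^sub>R x \<in> K n"
proof (induction n rule: induct2)
  case 1
  then show ?case using Ksub[of 0] by (simp add: subspace_0)
next
  case 2
  then show ?case using base by simp
next
  case (3 n)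
  have mono: "K m \<subseteq> K m'" if "m \<le> m'" for m m'
    using lift_Suc_mono_le[of K, OF Kmono that] .
  let ?w1 = "chv L (Suc n) x" and ?w0 = "chv L n x"
  let ?T1 = "cheb (Suc n) z" and ?T0 = "cheb n z"
  have eq: "chv L (Suc (Suc n)) x - cheb (Suc (Suc n)) z *\<^sub>R x
     = 2 *\<^sub>R L (?w1 - ?T1 *\<^sub>R x) + (2 * ?T1) *\<^sub>R (L x - z *\<^sub>R x) - (?w0 - ?T0 *\<^sub>R x)"
    by (simp add: lin algebra_simps)
  have i1: "L (?w1 - ?T1 *\<^sub>R x) \<in> K (Suc (Suc n))"
    using KL "3.IH"(2) by blast
  have i2: "L x - z *\<^sub>R x \<in> K (Suc (Suc n))" using base mono[of 1 "Suc (Suc n)"] by auto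
  have i3: "?w0 - ?T0 *\<^sub>R x \<in> K (Suc (Suc n))" using "3.IH"(1) mono[of n "Suc (Suc n)"] by auto
  note s = Ksub[of "Suc (Suc n)"]
  have a1: "2 *\<^sub>R L (?w1 - ?T1 *\<^sub>R x) \<in> K (Suc (Suc n))" using subspace_scale[OF s i1] .
  have a2: "(2 * ?T1) *\<^sub>R (L x - z *\<^sub>R x) \<in> K (Suc (Suc n))" using subspace_scale[OF s i2] .
  have a3: "2 *\<^sub>R L (?w1 - ?T1 *\<^sub>R x) + (2 * ?T1) *\<^sub>R (L x - z *\<^sub>R x) \<in> K (Suc (Suc n))"
    using subspace_add[OF s a1 a2] .
  show ?case unfolding eq using subspace_diff[OF s a3 i3] .
qed



lemma arith_ineq:
  fixes s D :: real
  assumes "0 < s" "s \<le> D"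
  shows "2 * D^2 - 2 * D * s \<le> (1 + (D^2 - s^2) / D^2) * (D^2 - s^2)"
proof -
  have D: "D > 0" using assms by simp
  have "(1 + (D^2 - s^2) / D^2) * (D^2 - s^2) - (2 * D^2 - 2 * D * s) = s * (D - s)^2 * (2 * D + s) / D^2"
    using D by (simp add: field_simps power2_eq_square)
  moreover have "s * (D - s)^2 * (2 * D + s) / D^2 \<ge> 0" using assms by simp
  ultimately show ?thesis by linarith
qed

lemma obj_id:
  fixes A M :: "real^'n^'n"
  assumes MA: "\<And>v. M *v v = A *v v + lam *\<^sub>R v" and Mx: "M *v x = - g"
    and symM: "\<And>a b. a \<bullet> (M *v b) = (M *v a) \<bullet> b" and yx: "y \<bullet> y = x \<bullet> x"
  shows "trs_obj A g y - trs_obj A g x = 1/2 * ((y - x) \<bullet> (M *v (y - x)))"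
proof -
  have Av: "A *v v = M *v v - lam *\<^sub>R v" for v using MA[of v] by simp
  have g: "g = - (M *v x)" using Mx by simp
  have s: "x \<bullet> (M *v y) = y \<bullet> (M *v x)" using symM[of x y] by (simp add: inner_commute)
  show ?thesis
    unfolding trs_obj_def Av g
    using s yx by (simp add: inner_diff_left inner_diff_right matrix_vector_mult_diff_distrib algebra_simps)
qed

lemma krylov_mono: "m \<le> m' \<Longrightarrow> krylov A g m \<subseteq> krylov A g m'"
  unfolding krylov_def by (intro span_mono) auto

lemma krylov_A:
  assumes "v \<in> krylov A g m" shows "A *v v \<in> krylov A g (Suc m)"
proof -
  let ?f = "\<lambda>v. A *v v"
  have "?f v \<in> ?f ` span {(?f ^^ j) g | j. j < m}" using assms unfolding krylov_def by blast
  also have "\<dots> = span (?f ` {(?f ^^ j) g | j. j < m})"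
    using linear_span_image[OF matrix_vector_mul_linear[of A]] by simp
  also have "\<dots> \<subseteq> krylov A g (Suc m)"
    unfolding krylov_def
  proof (intro span_mono)
    show "?f ` {(?f ^^ j) g | j. j < m} \<subseteq> {(?f ^^ j) g | j. j < Suc m}"
    proof
      fix z assume "z \<in> ?f ` {(?f ^^ j) g | j. j < m}"
      then obtain j where "j < m" "z = ?f ((?f ^^ j) g)" by auto
      then have "z = (?f ^^ Suc j) g" "Suc j < Suc m" by auto
      then show "z \<in> {(?f ^^ j) g | j. j < Suc m}" by blast
    qed
  qed
  finally show ?thesis .
qed

lemma krylov_g: "1 \<le> k \<Longrightarrow> g \<in> krylov A g k"
  unfolding krylov_def by (rule span_base) (auto intro!: exI[of _ 0])

lemma krylov_sub: "subspace (krylov A g k)"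
  unfolding krylov_def by (rule subspace_span)


lemma chv_inner:
  fixes L :: "'a::real_inner \<Rightarrow> 'a"
  assumes Lu: "\<And>v. L v \<bullet> u = l * (v \<bullet> u)"
  shows "chv L n x \<bullet> u = (x \<bullet> u) * cheb n l"
proof (induction n rule: induct2)
  case 1 then show ?case by simp
next
  case 2 then show ?case using Lu by simp
next
  case (3 n)
  have "chv L (Suc (Suc n)) x \<bullet> u = 2 * (L (chv L (Suc n) x) \<bullet> u) - chv L n x \<bullet> u"
    by (simp add: inner_diff_left)
  also have "\<dots> = 2 * l * (chv L (Suc n) x \<bullet> u) - chv L n x \<bullet> u" using Lu by simp
  also have "\<dots> = (x \<bullet> u) * cheb (Suc (Suc n)) l" using 3 by (simp add: algebra_simps)
  finally show ?case .
qed

lemma pyth2: fixes a c :: "'a::real_inner" shows "a \<bullet> c = 0 \<Longrightarrow> (a + c) \<bullet> (a + c) = a \<bullet> a + c \<bullet> c"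
  by (simp add: inner_add_left inner_add_right inner_commute)

lemma lin_aux: fixes v v' M M' :: "'a::real_vector"
  shows "(1/d) *\<^sub>R (e *\<^sub>R (v - c *\<^sub>R v') - 2 *\<^sub>R (M - c *\<^sub>R M')) = (1/d) *\<^sub>R (e *\<^sub>R v - 2 *\<^sub>R M) - c *\<^sub>R ((1/d) *\<^sub>R (e *\<^sub>R v' - 2 *\<^sub>R M'))"
  by (simp add: scaleR_diff_right scaleR_scaleR algebra_simps)

lemma base_aux: fixes x g :: "'a::real_vector" assumes "d \<noteq> 0"
  shows "(1/d) *\<^sub>R (e *\<^sub>R x - 2 *\<^sub>R (- g)) - (e / d) *\<^sub>R x = (2 / d) *\<^sub>R g"
  using assms by (simp add: scaleR_diff_right scaleR_scaleR algebra_simps)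


theorem theorem3p3:
  fixes A :: "real^'n^'n" and g x_opt :: "real^'n" and Delta lam_opt :: real
    and k :: nat and q :: "nat \<Rightarrow> real^'n" and h :: "nat \<Rightarrow> real"
  assumes symA: "transpose A = A"
    and g_nz: "g \<noteq> 0"
    and Delta_pos: "Delta > 0"
    and xopt_feas: "norm x_opt \<le> Delta"
    and xopt_min: "\<forall>y. norm y \<le> Delta \<longrightarrow> trs_obj A g x_opt \<le> trs_obj A g y"
    and lam_nonneg: "lam_opt \<ge> 0"
    and lam_eq: "(A + lam_opt *\<^sub>R mat 1) *v x_opt = - g"
    and lam_compl: "lam_opt * (Delta - norm x_opt) = 0"
    and lam_psd: "\<forall>v. 0 \<le> v \<bullet> ((A + lam_opt *\<^sub>R mat 1) *v v)"
    and easy: "lam_opt > - alpha_min A"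
    and k_range: "1 \<le> k" "k \<le> kmax A g"
    and lanczos: "lanczos_vectors A g k q"
    and h_feas: "knorm k h \<le> Delta"
    and h_min: "\<forall>h'. knorm k h' \<le> Delta \<longrightarrow> red_obj A g q k h \<le> red_obj A g q k h'"
    and bdry: "norm x_opt = Delta" "norm (lanczos_lift q k h) = Delta"
  shows
    "let A_opt = A + lam_opt *\<^sub>R mat 1;
         kappa = (alpha_max A + lam_opt) / (alpha_min A + lam_opt);
         x_k = lanczos_lift q k h;
         eps = infdist x_opt (krylov A g k);
         rho = (sqrt kappa - 1) / (sqrt kappa + 1);
         nA = onorm (\<lambda>v. A_opt *v v)
     in 0 \<le> trs_obj A g x_k - trs_obj A g x_opt
      \<and> trs_obj A g x_k - trs_obj A g x_opt \<le> (1/2) * nA * (1 + eps^2 / Delta^2) * eps^2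
      \<and> (1/2) * nA * (1 + eps^2 / Delta^2) * eps^2 \<le> 2 * nA * (Delta^2 + eps^2) * rho^(2*k)
      \<and> norm (x_k - x_opt) \<le> sqrt (kappa * (1 + eps^2 / Delta^2)) * eps
      \<and> sqrt (kappa * (1 + eps^2 / Delta^2)) * eps \<le> 2 * sqrt (kappa * (Delta^2 + eps^2)) * rho^k"
  proof -
  define Aop where "Aop = A + lam_opt *\<^sub>R mat 1"
  have Aop_v: "Aop *v v = A *v v + lam_opt *\<^sub>R v" for v
    unfolding Aop_def by (simp add: matrix_vector_mult_add_rdistrib scaleR_matrix_vector_assoc[symmetric])
  have symAop: "a \<bullet> (Aop *v c) = (Aop *v a) \<bullet> c" for a c
    using sym_inner[OF symA, of a c] by (simp add: Aop_v inner_add_left inner_add_right inner_commute)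
  have Aopx: "Aop *v x_opt = - g" using lam_eq unfolding Aop_def .
  obtain U where U: "finite U" "\<forall>u\<in>U. \<forall>w\<in>U. u \<bullet> w = (if u = w then 1 else 0)"
      "\<forall>u\<in>U. A *v u = (u \<bullet> (A *v u)) *\<^sub>R u" "UNIV \<subseteq> span U"
    using spectral_sub[OF symA, of UNIV] by auto
  define mu where "mu u = u \<bullet> (A *v u)" for u
  have eigU: "A *v u = mu u *\<^sub>R u" if "u \<in> U" for u using U(3) that unfolding mu_def by blast
  have expU: "(\<Sum>u\<in>U. (v \<bullet> u) *\<^sub>R u) = v" for v
  proof -
    have "v \<in> span ((\<lambda>u. u) ` U)" using U(4) by auto
    from ortho_expand[of U "\<lambda>u. u", OF U(1) _ this] U(2) show ?thesis by simp
  qed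
  have normU: "v \<bullet> v = (\<Sum>u\<in>U. (v \<bullet> u)^2)" for v
  proof -
    have "(\<Sum>u\<in>U. (v \<bullet> u) *\<^sub>R u) \<bullet> (\<Sum>u\<in>U. (v \<bullet> u) *\<^sub>R u) = (\<Sum>u\<in>U. (v \<bullet> u)^2)"
      using ortho_norm2[of U "\<lambda>u. u" "\<lambda>u. v \<bullet> u"] U by simp
    then show ?thesis by (simp only: expU)
  qed
  have A_u: "(A *v v) \<bullet> u = mu u * (v \<bullet> u)" if "u \<in> U" for u v
    using sym_inner[OF symA, of v u] eigU[OF that] by (simp add: inner_commute)
  have Aop_u: "(Aop *v v) \<bullet> u = (mu u + lam_opt) * (v \<bullet> u)" if "u \<in> U" for u v
    using A_u[OF that] by (simp add: Aop_v inner_add_left algebra_simps)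
  have uu: "u \<bullet> u = 1" if "u \<in> U" for u using U(2) that by auto
  have eig_sub: "eigvals A \<subseteq> mu ` U"
  proof
    fix t assume "t \<in> eigvals A"
    then obtain v where v: "v \<noteq> 0" "A *v v = t *\<^sub>R v" unfolding eigvals_def by auto
    have "\<exists>u\<in>U. v \<bullet> u \<noteq> 0"
    proof (rule ccontr)
      assume "\<not> ?thesis"
      then have "(\<Sum>u\<in>U. (v \<bullet> u) *\<^sub>R u) = 0" by simp
      then show False using expU[of v] v(1) by simp
    qed
    then obtain u where u: "u \<in> U" "v \<bullet> u \<noteq> 0" by blast
    have "t * (v \<bullet> u) = mu u * (v \<bullet> u)" using A_u[OF u(1), of v] v(2) by simp
    then have "t = mu u" using u(2) by simp
    then show "t \<in> mu ` U" using u(1) by blast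
  qed
  have fin_eig: "finite (eigvals A)" using finite_subset[OF eig_sub] U(1) by blast
  have mu_in: "mu u \<in> eigvals A" if "u \<in> U" for u
  proof -
    have "u \<noteq> 0" using uu[OF that] by auto
    then show ?thesis unfolding eigvals_def using eigU[OF that] by blast
  qed
  have mu_lo: "alpha_min A \<le> mu u" if "u \<in> U" for u
    unfolding alpha_min_def using fin_eig mu_in[OF that] by (rule Min_le)
  have mu_hi: "mu u \<le> alpha_max A" if "u \<in> U" for u
    unfolding alpha_max_def using fin_eig mu_in[OF that] by (rule Max_ge)
  have Une: "U \<noteq> {}"
  proof
    assume "U = {}"
    obtain bb :: "real^'n" where "bb \<in> Basis" using nonempty_Basis by blast
    then have "bb \<noteq> 0" by (auto simp: nonzero_Basis)
    then show False using expU[of bb] \<open>U = {}\<close> by simp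
  qed
  then obtain u0 where u0: "u0 \<in> U" by blast
  define a where "a = alpha_min A + lam_opt"
  define b where "b = alpha_max A + lam_opt"
  have a_pos: "a > 0" using easy unfolding a_def by simp
  have ab: "a \<le> b" using mu_lo[OF u0] mu_hi[OF u0] unfolding a_def b_def by simp
  have mlo: "a \<le> mu u + lam_opt" if "u \<in> U" for u using mu_lo[OF that] unfolding a_def by simp
  have mhi: "mu u + lam_opt \<le> b" if "u \<in> U" for u using mu_hi[OF that] unfolding b_def by simp
  have quad: "v \<bullet> (Aop *v v) = (\<Sum>u\<in>U. (mu u + lam_opt) * (v \<bullet> u)^2)" for v
  proof -
    have "v \<bullet> (Aop *v v) = (\<Sum>u\<in>U. (v \<bullet> u) *\<^sub>R u) \<bullet> (Aop *v v)"
      by (simp only: expU)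
    also have "\<dots> = (\<Sum>u\<in>U. (v \<bullet> u) * (u \<bullet> (Aop *v v)))"
      by (simp add: inner_sum_left)
    also have "\<dots> = (\<Sum>u\<in>U. (mu u + lam_opt) * (v \<bullet> u)^2)"
    proof (rule sum.cong)
      fix u assume u: "u \<in> U"
      have "u \<bullet> (Aop *v v) = (Aop *v v) \<bullet> u" by (rule inner_commute)
      then show "(v \<bullet> u) * (u \<bullet> (Aop *v v)) = (mu u + lam_opt) * (v \<bullet> u)^2"
        using Aop_u[OF u, of v] by (simp add: power2_eq_square)
    qed simp
    finally show ?thesis .
  qed
  have qlow: "a * (v \<bullet> v) \<le> v \<bullet> (Aop *v v)" for v
  proof -
    have "a * (v \<bullet> v) = (\<Sum>u\<in>U. a * (v \<bullet> u)^2)" by (simp add: normU[of v] sum_distrib_left)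
    also have "\<dots> \<le> (\<Sum>u\<in>U. (mu u + lam_opt) * (v \<bullet> u)^2)"
      by (rule sum_mono) (simp add: mlo mult_right_mono)
    finally show ?thesis using quad[of v] by simp
  qed
  have Aop_norm: "norm (Aop *v v) \<le> b * norm v" for v
  proof -
    have "(Aop *v v) \<bullet> (Aop *v v) = (\<Sum>u\<in>U. ((Aop *v v) \<bullet> u)^2)" by (rule normU)
    also have "\<dots> = (\<Sum>u\<in>U. ((mu u + lam_opt) * (v \<bullet> u))^2)"
      by (rule sum.cong) (simp_all add: Aop_u)
    also have "\<dots> \<le> (\<Sum>u\<in>U. b^2 * (v \<bullet> u)^2)"
    proof (rule sum_mono)
      fix u assume u: "u \<in> U"
      have "(mu u + lam_opt)^2 \<le> b^2"
        using mlo[OF u] mhi[OF u] a_pos by (intro power_mono) auto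
      then show "((mu u + lam_opt) * (v \<bullet> u))^2 \<le> b^2 * (v \<bullet> u)^2"
        unfolding power_mult_distrib by (rule mult_right_mono) simp
    qed
    also have "\<dots> = b^2 * (v \<bullet> v)" by (simp only: normU[of v] sum_distrib_left)
    also have "\<dots> = (b * norm v)^2" by (simp only: power_mult_distrib dot_square_norm)
    finally have "(norm (Aop *v v))^2 \<le> (b * norm v)^2" by (simp only: dot_square_norm)
    moreover have "0 \<le> b * norm v" using a_pos ab by simp
    ultimately show ?thesis by (rule power2_le_imp_le)
  qed
  define nA where "nA = onorm (\<lambda>v. Aop *v v)"
  have nA_le: "nA \<le> b" unfolding nA_def by (rule onorm_le) (rule Aop_norm)
  have nA_bd: "norm (Aop *v v) \<le> nA * norm v" for v
    unfolding nA_def using onorm[OF matrix_vector_mul_bounded_linear[of Aop]] by simp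
  have nA_nn: "0 \<le> nA" unfolding nA_def using onorm_pos_le[OF matrix_vector_mul_bounded_linear[of Aop]] by simp
  \<comment> \<open>Lanczos part\<close>
  define K where "K = krylov A g k"
  have q1: "q 1 = (1 / norm g) *\<^sub>R g" using lanczos unfolding lanczos_vectors_def by blast
  have orthq: "\<forall>i\<in>{1..k}. \<forall>j\<in>{1..k}. q i \<bullet> q j = (if i = j then 1 else 0)"
    using lanczos unfolding lanczos_vectors_def by blast
  have spanq: "span (q ` {1..k}) = K"
    using lanczos k_range(1) unfolding lanczos_vectors_def K_def by auto
  have ne_K: "K \<noteq> {}" using krylov_g[OF k_range(1), of g A] unfolding K_def by auto
  have Ksub: "subspace K" unfolding K_def by (rule krylov_sub)
  have gK: "g \<in> K" unfolding K_def using k_range(1) by (rule krylov_g)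
  have gq: "g = norm g *\<^sub>R q 1" using q1 g_nz by simp
  have k1: "1 \<in> {1..k}" using k_range(1) by simp
  have lift_inner: "lanczos_lift q k hh \<bullet> q j = hh j" if "j \<in> {1..k}" for hh j
    unfolding lanczos_lift_def using ortho_inner_sum[of "{1..k}" q j hh] orthq that by simp
  have lift_sq: "lanczos_lift q k hh \<bullet> lanczos_lift q k hh = (\<Sum>i=1..k. (hh i)^2)" for hh
    unfolding lanczos_lift_def using ortho_norm2[of "{1..k}" q hh] orthq by simp
  have lift_norm: "norm (lanczos_lift q k hh) = knorm k hh" for hh
    unfolding knorm_def norm_eq_sqrt_inner lift_sq ..
  have lift_K: "lanczos_lift q k hh \<in> K" for hh
    unfolding lanczos_lift_def spanq[symmetric]
    by (intro span_sum span_scale span_base) auto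
  have lift_obj: "trs_obj A g (lanczos_lift q k hh) = red_obj A g q k hh" for hh
  proof -
    have t1: "lanczos_lift q k hh \<bullet> (A *v lanczos_lift q k hh)
        = (\<Sum>i=1..k. \<Sum>j=1..k. hh i * lanczos_T A q i j * hh j)"
      unfolding lanczos_lift_def lanczos_T_def
      by (simp add: vec.sum matrix_vector_mult_scaleR inner_sum_left inner_sum_right sum_distrib_left algebra_simps)
        (subst sum.swap, simp add: algebra_simps)
    have t2: "lanczos_lift q k hh \<bullet> g = norm g * hh 1"
      by (subst gq) (simp only: inner_scaleR_right lift_inner[OF k1])
    show ?thesis unfolding trs_obj_def red_obj_def t1 t2 ..
  qed
  have K_lift: "y = lanczos_lift q k (\<lambda>i. y \<bullet> q i)" if "y \<in> K" for y
    unfolding lanczos_lift_def using ortho_expand[of "{1..k}" q y] orthq spanq that by simp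
  have xk_min: "trs_obj A g (lanczos_lift q k h) \<le> trs_obj A g y" if "y \<in> K" "norm y \<le> Delta" for y
  proof -
    let ?h = "\<lambda>i. y \<bullet> q i"
    have "knorm k ?h \<le> Delta" using that lift_norm[of ?h] K_lift[OF that(1)] by simp
    then have "red_obj A g q k h \<le> red_obj A g q k ?h" using h_min by blast
    then show ?thesis using lift_obj[of h] lift_obj[of ?h] K_lift[OF that(1)] by simp
  qed
  \<comment> \<open>objective identity\<close>
  have xx: "x_opt \<bullet> x_opt = Delta^2" using bdry(1) by (simp add: dot_square_norm)
  have objid: "trs_obj A g y - trs_obj A g x_opt = 1/2 * ((y - x_opt) \<bullet> (Aop *v (y - x_opt)))"
    if "norm y = Delta" for y
    using obj_id[of Aop A lam_opt x_opt g y, OF Aop_v Aopx symAop] that bdry(1)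
    by (simp add: dot_square_norm)
  \<comment> \<open>projection\<close>
  define p where "p = lanczos_lift q k (\<lambda>i. x_opt \<bullet> q i)"
  define r where "r = x_opt - p"
  have pK: "p \<in> K" unfolding p_def by (rule lift_K)
  have rq: "orthogonal r y" if "y \<in> q ` {1..k}" for y
  proof -
    from that obtain j where j: "j \<in> {1..k}" "y = q j" by auto
    show ?thesis unfolding orthogonal_def r_def p_def j(2)
      using lift_inner[OF j(1)] by (simp add: inner_diff_left)
  qed
  have rK: "r \<bullet> z = 0" if "z \<in> K" for z
    using orthogonal_to_span[of z "q ` {1..k}" r] rq that spanq unfolding orthogonal_def by auto
  define eps where "eps = infdist x_opt K"
  have eps_eq: "eps = norm r"
  proof (rule antisym)
    show "eps \<le> norm r" unfolding eps_def r_def using infdist_le[OF pK, of x_opt] by (simp add: dist_norm)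
    have "norm r \<le> dist x_opt z" if "z \<in> K" for z
    proof -
      have w: "p - z \<in> K" using pK that Ksub by (simp add: subspace_diff)
      have eqz: "x_opt - z = r + (p - z)" unfolding r_def by simp
      have "(x_opt - z) \<bullet> (x_opt - z) = r \<bullet> r + (p - z) \<bullet> (p - z)"
        unfolding eqz by (rule pyth2[OF rK[OF w]])
      then have "r \<bullet> r \<le> (x_opt - z) \<bullet> (x_opt - z)" by (simp add: add_increasing2)
      then show ?thesis by (simp add: dist_norm norm_le)
    qed
    then show "norm r \<le> eps" unfolding eps_def infdist_notempty[of K, OF ne_K]
      by (intro cINF_greatest) (use pK in auto)
  qed
  have eps_nn: "0 \<le> eps" unfolding eps_def by (rule infdist_nonneg)
  have pyth: "Delta^2 = p \<bullet> p + eps^2"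
  proof -
    have "x_opt = p + r" unfolding r_def by simp
    then have "x_opt \<bullet> x_opt = p \<bullet> p + r \<bullet> r"
      using pyth2[OF rK[OF pK]] by (simp add: add.commute inner_commute)
    then show ?thesis using xx eps_eq by (simp add: dot_square_norm)
  qed
  have px: "p \<bullet> x_opt = p \<bullet> p"
  proof -
    have "x_opt = p + r" unfolding r_def by simp
    then show ?thesis using rK[OF pK] by (simp add: inner_add_right inner_commute)
  qed
  have y_ex: "\<exists>y\<in>K. norm y = Delta \<and> (y - x_opt) \<bullet> (y - x_opt) \<le> (1 + eps^2 / Delta^2) * eps^2"
  proof (cases "p = 0")
    case True
    define y where "y = (Delta / norm g) *\<^sub>R g"
    have yK: "y \<in> K" unfolding y_def using gK Ksub by (simp add: subspace_scale)
    have ny: "norm y = Delta" unfolding y_def using g_nz Delta_pos by simp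
    have "r = x_opt" unfolding r_def using True by simp
    then have "y \<bullet> x_opt = 0" using rK[OF yK] by (simp add: inner_commute)
    then have "(y - x_opt) \<bullet> (y - x_opt) = y \<bullet> y + x_opt \<bullet> x_opt"
      by (simp add: inner_diff_left inner_diff_right inner_commute)
    also have "\<dots> = 2 * Delta^2" using ny xx by (simp add: dot_square_norm)
    also have "\<dots> = (1 + eps^2 / Delta^2) * eps^2" using pyth True Delta_pos by simp
    finally show ?thesis using yK ny by (intro bexI[of _ y] conjI) auto
  next
    case False
    define s where "s = norm p"
    have s_pos: "s > 0" unfolding s_def using False by simp
    have pp: "p \<bullet> p = s^2" unfolding s_def by (simp add: dot_square_norm)
    have sD: "s \<le> Delta" using pyth pp eps_nn Delta_pos
      by (metis le_add_same_cancel1 power2_le_imp_le zero_le_power2 less_imp_le)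
    define y where "y = (Delta / s) *\<^sub>R p"
    have yK: "y \<in> K" unfolding y_def using pK Ksub by (simp add: subspace_scale)
    have ny: "norm y = Delta" unfolding y_def s_def using False Delta_pos by simp
    have yx: "y \<bullet> x_opt = Delta * s" unfolding y_def using px pp s_pos by (simp add: power2_eq_square)
    have "(y - x_opt) \<bullet> (y - x_opt) = y \<bullet> y - 2 * (y \<bullet> x_opt) + x_opt \<bullet> x_opt"
      by (simp add: inner_diff_left inner_diff_right inner_commute)
    also have "\<dots> = 2 * Delta^2 - 2 * Delta * s" using ny xx yx by (simp add: dot_square_norm)
    also have "\<dots> \<le> (1 + (Delta^2 - s^2) / Delta^2) * (Delta^2 - s^2)"
      by (rule arith_ineq[OF s_pos sD])
    also have "\<dots> = (1 + eps^2 / Delta^2) * eps^2" using pyth pp by simp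
    finally show ?thesis using yK ny by (intro bexI[of _ y] conjI) auto
  qed
  define xk where "xk = lanczos_lift q k h"
  have nxk: "norm xk = Delta" using bdry(2) unfolding xk_def .
  obtain y where y: "y \<in> K" "norm y = Delta" "(y - x_opt) \<bullet> (y - x_opt) \<le> (1 + eps^2 / Delta^2) * eps^2"
    using y_ex by blast
  have f_nn: "0 \<le> trs_obj A g xk - trs_obj A g x_opt" using xopt_min nxk by force
  have quad_up: "d \<bullet> (Aop *v d) \<le> nA * (d \<bullet> d)" for d
  proof -
    have "d \<bullet> (Aop *v d) \<le> norm d * norm (Aop *v d)" by (rule norm_cauchy_schwarz)
    also have "\<dots> \<le> norm d * (nA * norm d)" by (rule mult_left_mono[OF nA_bd norm_ge_zero])
    also have "\<dots> = nA * (d \<bullet> d)" by (simp add: dot_square_norm power2_eq_square)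
    finally show ?thesis .
  qed
  have f_up: "trs_obj A g xk - trs_obj A g x_opt \<le> 1/2 * nA * (1 + eps^2 / Delta^2) * eps^2"
  proof -
    have "trs_obj A g xk \<le> trs_obj A g y" unfolding xk_def using xk_min y by simp
    then have "trs_obj A g xk - trs_obj A g x_opt \<le> 1/2 * ((y - x_opt) \<bullet> (Aop *v (y - x_opt)))"
      using objid[OF y(2)] by simp
    also have "\<dots> \<le> 1/2 * (nA * ((y - x_opt) \<bullet> (y - x_opt)))" using quad_up by simp
    also have "\<dots> \<le> 1/2 * (nA * ((1 + eps^2 / Delta^2) * eps^2))"
      using y(3) nA_nn by (simp add: mult_left_mono)
    finally show ?thesis by simp
  qed
  define kappa where "kappa = (alpha_max A + lam_opt) / (alpha_min A + lam_opt)"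
  have kab: "kappa = b / a" unfolding kappa_def a_def b_def ..
  have dist_bd: "norm (xk - x_opt) \<le> sqrt (kappa * (1 + eps^2 / Delta^2)) * eps"
  proof -
    let ?e = "xk - x_opt"
    have "a * (?e \<bullet> ?e) \<le> ?e \<bullet> (Aop *v ?e)" by (rule qlow)
    also have "\<dots> = 2 * (trs_obj A g xk - trs_obj A g x_opt)" using objid[OF nxk] by simp
    also have "\<dots> \<le> nA * ((1 + eps^2 / Delta^2) * eps^2)" using f_up by simp
    also have "\<dots> \<le> b * ((1 + eps^2 / Delta^2) * eps^2)"
      by (rule mult_right_mono[OF nA_le]) simp
    finally have "?e \<bullet> ?e \<le> (b / a) * ((1 + eps^2 / Delta^2) * eps^2)"
      using a_pos by (simp add: field_simps)
    then have "?e \<bullet> ?e \<le> (kappa * (1 + eps^2 / Delta^2)) * eps^2" by (simp add: kab)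
    then have "sqrt (?e \<bullet> ?e) \<le> sqrt ((kappa * (1 + eps^2 / Delta^2)) * eps^2)"
      by (rule real_sqrt_le_mono)
    then show ?thesis using eps_nn by (simp add: norm_eq_sqrt_inner real_sqrt_mult)
  qed
  define rho where "rho = (sqrt kappa - 1) / (sqrt kappa + 1)"
  have kappa_ge1: "1 \<le> kappa" using kab a_pos ab by simp
  have rho_nn: "0 \<le> rho" unfolding rho_def using kappa_ge1 by simp
  have eps_bd: "eps \<le> 2 * rho^k * Delta"
  proof (cases "a = b")
    case True
    have Aop_a: "Aop *v v = a *\<^sub>R v" for v
    proof -
      have "Aop *v v = (\<Sum>u\<in>U. ((Aop *v v) \<bullet> u) *\<^sub>R u)" by (simp only: expU)
      also have "\<dots> = (\<Sum>u\<in>U. a *\<^sub>R ((v \<bullet> u) *\<^sub>R u))"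
      proof (rule sum.cong)
        fix u assume u: "u \<in> U"
        have "mu u + lam_opt = a" using mlo[OF u] mhi[OF u] True by simp
        then show "((Aop *v v) \<bullet> u) *\<^sub>R u = a *\<^sub>R ((v \<bullet> u) *\<^sub>R u)" using Aop_u[OF u, of v] by simp
      qed simp
      also have "\<dots> = a *\<^sub>R v" by (simp only: scaleR_sum_right[symmetric] expU)
      finally show ?thesis .
    qed
    have ax: "a *\<^sub>R x_opt = - g" using Aopx Aop_a by simp
    have "x_opt = (1 / a) *\<^sub>R (a *\<^sub>R x_opt)" using a_pos by simp
    also have "\<dots> = (- 1 / a) *\<^sub>R g" unfolding ax by simp
    finally have "x_opt = (- 1 / a) *\<^sub>R g" .
    then have "x_opt \<in> K" using subspace_scale[OF Ksub gK] by metis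
    then have "eps = 0" unfolding eps_def by simp
    then show ?thesis using rho_nn Delta_pos by simp
  next
    case False
    then have ab': "a < b" using ab by simp
    define L where "L = (\<lambda>v. (1 / (b - a)) *\<^sub>R ((a + b) *\<^sub>R v - 2 *\<^sub>R (Aop *v v)))"
    define l where "l u = ((a + b) - 2 * (mu u + lam_opt)) / (b - a)" for u
    define z where "z = (a + b) / (b - a)"
    have Lu: "L v \<bullet> u = l u * (v \<bullet> u)" if "u \<in> U" for u v
    proof -
      have "L v \<bullet> u = (1 / (b - a)) * ((a + b) * (v \<bullet> u) - 2 * ((Aop *v v) \<bullet> u))"
        unfolding L_def by (simp only: inner_scaleR_left inner_diff_left)
      also have "\<dots> = l u * (v \<bullet> u)" unfolding Aop_u[OF that] l_def using ab'
        by (simp add: field_simps)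
      finally show ?thesis .
    qed
    have l_bd: "\<bar>l u\<bar> \<le> 1" if "u \<in> U" for u
    proof -
      have "a \<le> mu u + lam_opt" "mu u + lam_opt \<le> b" using mlo[OF that] mhi[OF that] by auto
      then show ?thesis unfolding l_def using ab' by (simp add: abs_le_iff divide_le_eq le_divide_eq)
    qed
    define w where "w = chv L k x_opt"
    have wu: "w \<bullet> u = (x_opt \<bullet> u) * cheb k (l u)" if "u \<in> U" for u
      unfolding w_def by (rule chv_inner) (rule Lu[OF that])
    have ww: "w \<bullet> w \<le> Delta^2"
    proof -
      have "w \<bullet> w = (\<Sum>u\<in>U. (w \<bullet> u)^2)" by (rule normU)
      also have "\<dots> \<le> (\<Sum>u\<in>U. (x_opt \<bullet> u)^2)"
      proof (rule sum_mono)
        fix u assume u: "u \<in> U"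
        have "(cheb k (l u))^2 \<le> 1" using cheb_bound[OF l_bd[OF u], of k] by (simp add: abs_square_le_1)
        have "(w \<bullet> u)^2 = (x_opt \<bullet> u)^2 * (cheb k (l u))^2"
          unfolding wu[OF u] by (rule power_mult_distrib)
        also have "\<dots> \<le> (x_opt \<bullet> u)^2 * 1"
          by (rule mult_left_mono[OF \<open>(cheb k (l u))^2 \<le> 1\<close> zero_le_power2])
        finally show "(w \<bullet> u)^2 \<le> (x_opt \<bullet> u)^2" by simp
      qed
      also have "\<dots> = Delta^2" using normU[of x_opt] xx by simp
      finally show ?thesis .
    qed
    have nw: "norm w \<le> Delta"
    proof -
      have "(norm w)^2 \<le> Delta^2" using ww by (simp only: dot_square_norm)
      then show ?thesis by (rule power2_le_imp_le[OF _ less_imp_le[OF Delta_pos]])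
    qed
    have wK: "w - cheb k z *\<^sub>R x_opt \<in> K"
      unfolding w_def K_def
    proof (rule chv_K[where K = "krylov A g"])
      show "L (v - c *\<^sub>R v') = L v - c *\<^sub>R L v'" for v v' c
        unfolding L_def matrix_vector_mult_diff_distrib matrix_vector_mult_scaleR by (rule lin_aux)
      show "L v \<in> krylov A g (Suc m)" if "v \<in> krylov A g m" for m v
      proof -
        have v1: "v \<in> krylov A g (Suc m)" using krylov_mono[of m "Suc m" A g] that by auto
        have v2: "A *v v \<in> krylov A g (Suc m)" using krylov_A[OF that] .
        note S = krylov_sub[of A g "Suc m"]
        show ?thesis unfolding L_def Aop_v
          using v1 v2 by (intro subspace_scale[OF S] subspace_diff[OF S] subspace_add[OF S]) 
      qed
      show "subspace (krylov A g m)" for m by (rule krylov_sub)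
      show "krylov A g m \<subseteq> krylov A g (Suc m)" for m by (rule krylov_mono) simp
      have "L x_opt - z *\<^sub>R x_opt = (2 / (b - a)) *\<^sub>R g"
        unfolding L_def z_def Aopx by (rule base_aux) (use ab' in simp)
      then show "L x_opt - z *\<^sub>R x_opt \<in> krylov A g 1"
        using krylov_g[of 1 g A] krylov_sub[of A g 1] by (simp add: subspace_scale)
    qed
    define sa where "sa = sqrt a"
    define sb where "sb = sqrt b"
    have sa_pos: "sa > 0" unfolding sa_def using a_pos by simp
    have sab: "sa < sb" unfolding sa_def sb_def using ab' by simp
    have sa2: "sa * sa = a" unfolding sa_def using a_pos by simp
    have sb2: "sb * sb = b" unfolding sb_def using a_pos ab' by simp
    define r0 where "r0 = (sb + sa) / (sb - sa)"
    have r0_pos: "r0 > 0" unfolding r0_def using sa_pos sab by simp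
    have r0z: "2 * z = r0 + 1 / r0"
    proof -
      have d: "b - a = (sb - sa) * (sb + sa)" using sa2 sb2 by (simp add: algebra_simps)
      have "r0 + 1 / r0 = ((sb + sa)^2 + (sb - sa)^2) / ((sb - sa) * (sb + sa))"
        unfolding r0_def using sa_pos sab by (simp add: field_simps power2_eq_square)
      also have "(sb + sa)^2 + (sb - sa)^2 = 2 * (a + b)" using sa2 sb2 by (simp add: power2_eq_square algebra_simps)
      finally show ?thesis unfolding z_def d by simp
    qed
    define T where "T = cheb k z"
    have T_eq: "T = (r0^k + (1/r0)^k) / 2" unfolding T_def by (rule cheb_pow[OF r0_pos r0z])
    have rho_eq: "rho = 1 / r0"
    proof -
      have sk: "sqrt kappa = sb / sa" unfolding kab sa_def sb_def by (simp add: real_sqrt_divide)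
      have e1: "sb / sa - 1 = (sb - sa) / sa" using sa_pos by (simp add: field_simps)
      have e2: "sb / sa + 1 = (sb + sa) / sa" using sa_pos by (simp add: field_simps)
      have p1: "sb + sa > 0" "sb - sa > 0" using sa_pos sab by auto
      show ?thesis unfolding rho_def r0_def sk e1 e2 using sa_pos p1 by simp
    qed
    have T_pos: "T > 0"
    proof -
      have "0 < r0^k" "0 < (1/r0)^k" using r0_pos by simp_all
      then show ?thesis unfolding T_eq by simp
    qed
    have T_inv: "1 / T \<le> 2 * rho^k"
    proof -
      have "r0^k / 2 \<le> T" using T_eq r0_pos by simp
      then have "1 / T \<le> 1 / (r0^k / 2)" using r0_pos T_pos by (intro divide_left_mono) auto
      also have "\<dots> = 2 * rho^k" unfolding rho_eq by (simp add: power_one_over)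
      finally show ?thesis .
    qed
    define y' where "y' = x_opt - (1 / T) *\<^sub>R w"
    have "y' = (- 1 / T) *\<^sub>R (w - T *\<^sub>R x_opt)"
      unfolding y'_def using T_pos by (simp add: algebra_simps)
    then have y'K: "y' \<in> K" using subspace_scale[OF Ksub wK, of "- 1 / T"] unfolding T_def by metis
    have "eps \<le> dist x_opt y'" unfolding eps_def by (rule infdist_le[OF y'K])
    also have "\<dots> = norm w / T" unfolding y'_def dist_norm using T_pos by simp
    also have "\<dots> \<le> Delta / T" using nw T_pos by (simp add: divide_right_mono)
    also have "\<dots> = Delta * (1 / T)" by simp
    also have "\<dots> \<le> Delta * (2 * rho^k)" using T_inv Delta_pos by (intro mult_left_mono) auto
    finally show ?thesis by (simp add: algebra_simps)
  qed
  define nA' where "nA' = nA"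
  have c3: "1/2 * nA * (1 + eps^2 / Delta^2) * eps^2 \<le> 2 * nA * (Delta^2 + eps^2) * rho^(2*k)"
  proof -
    have e2: "eps^2 \<le> (2 * rho^k * Delta)^2" using eps_bd eps_nn by (intro power_mono) auto
    have "(1 + eps^2 / Delta^2) * eps^2 = (Delta^2 + eps^2) * (eps^2 / Delta^2)"
      using Delta_pos by (simp add: field_simps)
    also have "\<dots> \<le> (Delta^2 + eps^2) * (4 * rho^(2*k))"
    proof (rule mult_left_mono)
      show "eps^2 / Delta^2 \<le> 4 * rho^(2*k)"
        using e2 Delta_pos by (simp add: field_simps power_mult_distrib power_mult)
    qed simp
    finally have "(1 + eps^2 / Delta^2) * eps^2 \<le> (Delta^2 + eps^2) * (4 * rho^(2*k))" .
    then have "1/2 * nA * ((1 + eps^2 / Delta^2) * eps^2) \<le> 1/2 * nA * ((Delta^2 + eps^2) * (4 * rho^(2*k)))"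
      using nA_nn by (intro mult_left_mono) auto
    then show ?thesis by (simp add: algebra_simps)
  qed
  have c5: "sqrt (kappa * (1 + eps^2 / Delta^2)) * eps \<le> 2 * sqrt (kappa * (Delta^2 + eps^2)) * rho^k"
  proof -
    have "kappa * (1 + eps^2 / Delta^2) = kappa * (Delta^2 + eps^2) / Delta^2"
      using Delta_pos by (simp add: field_simps)
    then have "sqrt (kappa * (1 + eps^2 / Delta^2)) = sqrt (kappa * (Delta^2 + eps^2)) / Delta"
      using Delta_pos by (simp add: real_sqrt_divide)
    then have "sqrt (kappa * (1 + eps^2 / Delta^2)) * eps = sqrt (kappa * (Delta^2 + eps^2)) * (eps / Delta)"
      by simp
    also have "\<dots> \<le> sqrt (kappa * (Delta^2 + eps^2)) * (2 * rho^k)"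
      using eps_bd Delta_pos kappa_ge1 by (intro mult_left_mono) (auto simp: field_simps)
    finally show ?thesis by (simp add: algebra_simps)
  qed
  show ?thesis
    unfolding Let_def Aop_def[symmetric] K_def[symmetric] eps_def[symmetric] xk_def[symmetric]
      kappa_def[symmetric] rho_def[symmetric]
    using f_nn f_up c3 dist_bd c5 unfolding nA_def by auto
qed

end
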